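(* Let $\lambda$ be a nonzero real number, $x$ real, and $n\ge0$ an integer. Then $$\beta_{n,\lambda}(x)=\sum_{k=0}^{n}k!\,S_{2,\lambda}(n,k)\sum_{j=0}^{k}\binom{x}{j}\frac{\lambda^{k-j}}{(k-j+1)!}(1)_{k-j+1,\frac{1}{\lambda}}.$$ In particular, for $x=0$, $$\beta_{n,\lambda}=\sum_{k=0}^{n}k!\,S_{2,\lambda}(n,k)\frac{\lambda^{k}}{(k+1)!}(1)_{k+1,\frac{1}{\lambda}}.$$
   Context: For real $y$, $\mu\neq 0$ and integer $k\ge0$: $(y)_{0,\mu}=1$, $(y)_{k,\mu}=y(y-\mu)\cdots(y-(k-1)\mu)$ (used with $\mu=\lambda$ and $\mu=1/\lambda$); $(y)_0=1$, $(y)_k=y(y-1)\cdots(y-k+1)$. The degenerate exponential is $e_\lambda^x(t)=\sum_{k\ge0}(x)_{k,\lambda}t^k/k!=(1+\lambda t)^{x/\lambda}$, $e_\lambda(t)=e^1_\lambda(t)$. The degenerate Bernoulli polynomials are defined by $\frac{t}{e_\lambda(t)-1}e_\lambda^x(t)=\sum_{n\ge0}\beta_{n,\lambda}(x)\frac{t^n}{n!}$, and $\beta_{n,\lambda}=\beta_{n,\lambda}(0)$. The degenerate Stirling numbers of the second kind are defined by $(x)_{n,\lambda}=\sum_{k=0}^{n}S_{2,\lambda}(n,k)(x)_{k}$ ($n\ge0$). *)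

theory Defs
  imports "HOL-Analysis.Analysis" "HOL-Computational_Algebra.Formal_Power_Series"
begin

definition gen_ff :: "real \<Rightarrow> nat \<Rightarrow> real \<Rightarrow> real" where
  "gen_ff y k mu = (\<Prod>i<k. (y - of_nat i * mu))"

definition ffall :: "real \<Rightarrow> nat \<Rightarrow> real" where
  "ffall y k = (\<Prod>i<k. (y - of_nat i))"

definition deg_exp :: "real \<Rightarrow> real \<Rightarrow> real fps" where
  "deg_exp lam x = Abs_fps (\<lambda>k. gen_ff x k lam / fact k)"

definition deg_bernoulli :: "real \<Rightarrow> nat \<Rightarrow> real \<Rightarrow> real" where
  "deg_bernoulli lam n x =
     fact n * fps_nth ((fps_X / (deg_exp lam 1 - 1)) * deg_exp lam x) n"

definition deg_stirling2 :: "real \<Rightarrow> nat \<Rightarrow> nat \<Rightarrow> real" where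
  "deg_stirling2 lam n =
     (THE c. (\<forall>k>n. c k = 0) \<and> (\<forall>x. gen_ff x n lam = (\<Sum>k=0..n. c k * ffall x k)))"

end

theory Submission
  imports Defs
begin

lemma gen_ff_Suc: "gen_ff y (Suc n) mu = gen_ff y n mu * (y - of_nat n * mu)"
  by (simp add: gen_ff_def lessThan_Suc)

lemma deg_exp_nth: "fps_nth (deg_exp lam c) n = gen_ff c n lam / fact n"
  by (simp add: deg_exp_def)

lemma deg_exp_0: "fps_nth (deg_exp lam c) 0 = 1"
  by (simp add: deg_exp_def gen_ff_def)

lemma ode_deg_exp:
  "(1 + fps_const lam * fps_X) * fps_deriv (deg_exp lam c) = fps_const c * deg_exp lam c"
proof (rule fps_ext)
  fix n
  show "fps_nth ((1 + fps_const lam * fps_X) * fps_deriv (deg_exp lam c)) n = fps_nth (fps_const c * deg_exp lam c) n"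
  proof (cases n)
    case 0
    then show ?thesis by (simp add: algebra_simps deg_exp_nth gen_ff_def)
  next
    case (Suc m)
    have "fps_nth ((1 + fps_const lam * fps_X) * fps_deriv (deg_exp lam c)) n
       = of_nat (n+1) * (gen_ff c (Suc n) lam / fact (Suc n)) + lam * (of_nat n * (gen_ff c n lam / fact n))"
      using Suc by (simp add: algebra_simps deg_exp_nth del: fact_Suc of_nat_Suc)
    also have "\<dots> = (gen_ff c n lam * (c - of_nat n * lam)) / fact n + lam * of_nat n * gen_ff c n lam / fact n"
      by (simp add: gen_ff_Suc del: of_nat_Suc)
    also have "\<dots> = c * (gen_ff c n lam / fact n)"
      by (simp add: add_divide_distrib[symmetric] algebra_simps)
    finally show ?thesis by (simp add: deg_exp_nth)
  qed
qed

lemma ode_unique: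
  assumes "(1 + fps_const lam * fps_X) * fps_deriv Y = fps_const c * (Y :: real fps)"
  shows "fps_nth Y n = fps_nth Y 0 * gen_ff c n lam / fact n"
proof (induction n)
  case 0
  then show ?case by (simp add: gen_ff_def)
next
  case (Suc n)
  have "fps_nth ((1 + fps_const lam * fps_X) * fps_deriv Y) n = fps_nth (fps_const c * Y) n"
    using assms by simp
  then have "of_nat (n+1) * fps_nth Y (Suc n) + lam * (of_nat n * fps_nth Y n) = c * fps_nth Y n"
    by (cases n) (simp_all add: algebra_simps)
  then have "fps_nth Y (Suc n) = (c - of_nat n * lam) * fps_nth Y n / of_nat (n+1)"
    by (simp add: field_simps del: of_nat_Suc)
  then show ?case using Suc by (simp add: gen_ff_Suc field_simps del: of_nat_Suc)
qed

lemma binom_ode: "(1 + fps_X) * fps_deriv (fps_binomial c) = fps_const (c::real) * fps_binomial c"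
proof -
  have "(1 + fps_X) * fps_deriv (fps_binomial c) = (1 + fps_X) * (fps_const c * fps_binomial c * inverse (1 + fps_X))"
    by (simp add: fps_binomial_deriv fps_divide_unit)
  also have "\<dots> = fps_const c * fps_binomial c * (inverse (1 + fps_X) * (1 + fps_X))"
    by (simp add: algebra_simps)
  also have "inverse (1 + fps_X) * (1 + fps_X) = (1 :: real fps)"
    by (rule inverse_mult_eq_1) simp
  finally show ?thesis by simp
qed

definition EE :: "real \<Rightarrow> real fps" where "EE lam = deg_exp lam 1 - 1"

lemma EE_0: "fps_nth (EE lam) 0 = 0"
  by (simp add: EE_def deg_exp_0)

lemma deg_exp_compose: "deg_exp lam c = fps_binomial c oo EE lam"
proof -
  define E where "E = EE lam"
  define D where "D = deg_exp lam 1"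
  define B where "B = fps_binomial c"
  define H where "H = B oo E"
  define P where "P = 1 + fps_const lam * fps_X"
  have E0: "fps_nth E 0 = 0" by (simp add: E_def EE_0)
  have DE: "D = 1 + E" by (simp add: D_def E_def EE_def)
  have h1: "D * (fps_deriv B oo E) = fps_const c * H"
  proof -
    have "((1 + fps_X) * fps_deriv B) oo E = (fps_const c * B) oo E"
      by (simp add: B_def binom_ode)
    then show ?thesis
      using E0 by (simp add: fps_compose_mult_distrib fps_compose_add_distrib DE H_def)
  qed
  have h2: "fps_deriv H = (fps_deriv B oo E) * fps_deriv D"
    using E0 by (simp add: H_def fps_compose_deriv DE)
  have h3: "P * fps_deriv D = D"
    using ode_deg_exp[of lam 1] by (simp add: P_def D_def)
  have "D * (P * fps_deriv H) = (D * (fps_deriv B oo E)) * (P * fps_deriv D)"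
    by (simp add: h2 algebra_simps)
  also have "\<dots> = D * (fps_const c * H)"
    by (simp add: h1 h3 algebra_simps)
  finally have "P * fps_deriv H = fps_const c * H"
    using deg_exp_0[of lam 1] by (auto simp: D_def)
  then have "\<And>n. fps_nth H n = fps_nth H 0 * gen_ff c n lam / fact n"
    using ode_unique unfolding P_def by blast
  moreover have "fps_nth H 0 = 1" by (simp add: H_def B_def)
  ultimately show ?thesis
    by (intro fps_ext) (simp add: deg_exp_nth H_def B_def E_def)
qed

lemma ffall_gchoose: "ffall x k = fact k * (x gchoose k)"
  by (simp add: ffall_def gbinomial_prod_rev atLeast0LessThan)

lemma gen_ff_expand:
  "gen_ff x n lam = (\<Sum>k=0..n. (fact n * fps_nth (EE lam ^ k) n / fact k) * ffall x k)"
proof -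
  have "gen_ff x n lam / fact n = fps_nth (fps_binomial x oo EE lam) n"
    by (simp add: deg_exp_compose[symmetric] deg_exp_nth)
  also have "\<dots> = (\<Sum>k=0..n. (x gchoose k) * fps_nth (EE lam ^ k) n)"
    by (simp add: fps_compose_nth)
  finally have "gen_ff x n lam = fact n * (\<Sum>k=0..n. (x gchoose k) * fps_nth (EE lam ^ k) n)"
    by (simp add: field_simps)
  also have "\<dots> = (\<Sum>k=0..n. (fact n * fps_nth (EE lam ^ k) n / fact k) * ffall x k)"
    by (simp add: sum_distrib_left ffall_gchoose mult_ac)
  finally show ?thesis .
qed

lemma EE_pow_nth_zero: "n < k \<Longrightarrow> fps_nth (EE lam ^ k) n = 0"
  using startsby_zero_power_prefix[OF EE_0[of lam]] by blast

lemma ffall_nat_zero: "m < j \<Longrightarrow> ffall (of_nat m) j = 0"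
  by (simp add: ffall_gchoose binomial_gbinomial[symmetric])

lemma ffall_nat_self: "ffall (of_nat m) m = fact m"
  by (simp add: ffall_gchoose binomial_gbinomial[symmetric])

lemma ffall_unique:
  assumes "\<forall>k>n. e k = 0" "\<forall>x. (\<Sum>k=0..n. e k * ffall x k) = (0::real)"
  shows "e m = 0"
proof (induction m rule: less_induct)
  case (less m)
  show ?case
  proof (cases "m \<le> n")
    case False then show ?thesis using assms(1) by simp
  next
    case True
    have "0 = (\<Sum>k=0..n. e k * ffall (of_nat m) k)" using assms(2) by simp
    also have "\<dots> = (\<Sum>k\<in>{m}. e k * ffall (of_nat m) k)"
    proof (rule sum.mono_neutral_right)
      show "\<forall>i\<in>{0..n} - {m}. e i * ffall (real m) i = 0"
      proof
        fix i assume "i \<in> {0..n} - {m}"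
        then have "i < m \<or> m < i" by auto
        then show "e i * ffall (real m) i = 0"
          using less.IH ffall_nat_zero by auto
      qed
    qed (use True in auto)
    finally show ?thesis by (simp add: ffall_nat_self)
  qed
qed

lemma stirling_eq: "deg_stirling2 lam n k = fact n * fps_nth (EE lam ^ k) n / fact k"
proof -
  define c where "c = (\<lambda>k. fact n * fps_nth (EE lam ^ k) n / fact k :: real)"
  have P: "(\<forall>k>n. c k = 0) \<and> (\<forall>x. gen_ff x n lam = (\<Sum>k=0..n. c k * ffall x k))"
    using gen_ff_expand EE_pow_nth_zero by (auto simp: c_def)
  have "deg_stirling2 lam n = c"
    unfolding deg_stirling2_def
  proof (rule the_equality)
    fix d assume d: "(\<forall>k>n. d k = 0) \<and> (\<forall>x. gen_ff x n lam = (\<Sum>k=0..n. d k * ffall x k))"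
    show "d = c"
    proof
      fix m
      have "(\<lambda>k. d k - c k) m = 0"
      proof (rule ffall_unique[of n])
        show "\<forall>k>n. d k - c k = 0" using d P by simp
        show "\<forall>x. (\<Sum>k=0..n. (d k - c k) * ffall x k) = 0"
          using d P by (simp add: left_diff_distrib sum_subtractf)
      qed
      then show "d m = c m" by simp
    qed
  qed (rule P)
  then show ?thesis by (simp add: c_def)
qed

lemma prod_lam: "(\<Prod>i<k. (lam - of_nat i)) = lam ^ k * gen_ff 1 k (1/lam)" if "lam \<noteq> 0"
proof (induction k)
  case 0 then show ?case by (simp add: gen_ff_def)
next
  case (Suc k)
  then show ?case using that by (simp add: lessThan_Suc gen_ff_Suc field_simps)
qed

definition CC :: "real \<Rightarrow> real fps" where
  "CC lam = Abs_fps (\<lambda>m. lam ^ m / fact (m+1) * gen_ff 1 (m+1) (1/lam))"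

lemma X_CC: "lam \<noteq> 0 \<Longrightarrow> fps_X * CC lam = fps_const (1/lam) * (fps_binomial lam - 1)"
proof (rule fps_ext)
  fix n assume l: "lam \<noteq> 0"
  show "fps_nth (fps_X * CC lam) n = fps_nth (fps_const (1/lam) * (fps_binomial lam - 1)) n"
  proof (cases n)
    case 0 then show ?thesis by (simp add: CC_def)
  next
    case (Suc m)
    have "(lam gchoose Suc m) = lam ^ Suc m * gen_ff 1 (Suc m) (1/lam) / fact (Suc m)"
      using prod_lam[OF l, of "Suc m"] by (simp add: gbinomial_prod_rev atLeast0LessThan)
    then show ?thesis using Suc l by (simp add: CC_def field_simps del: fact_Suc)
  qed
qed

lemma deg_exp_lam: "deg_exp lam lam = 1 + fps_const lam * fps_X"
proof (rule fps_ext)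
  fix n show "fps_nth (deg_exp lam lam) n = fps_nth (1 + fps_const lam * fps_X) n"
  proof (cases "n \<le> 1")
    case True then show ?thesis by (cases n) (auto simp: deg_exp_nth gen_ff_def)
  next
    case False
    then have "gen_ff lam n lam = 0" unfolding gen_ff_def
      by (intro prod_zero bexI[of _ 1]) auto
    then show ?thesis using False by (simp add: deg_exp_nth)
  qed
qed

lemma XE: "lam \<noteq> 0 \<Longrightarrow> fps_X / EE lam = CC lam oo EE lam"
proof -
  assume l: "lam \<noteq> 0"
  have E0: "fps_nth (EE lam) 0 = 0" by (rule EE_0)
  have "EE lam * (CC lam oo EE lam) = (fps_X * CC lam) oo EE lam"
    using E0 by (simp add: fps_compose_mult_distrib)
  also have "\<dots> = fps_const (1/lam) * ((fps_binomial lam oo EE lam) - 1)"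
    using E0 l by (simp add: X_CC fps_compose_mult_distrib fps_compose_sub_distrib)
  also have "\<dots> = fps_X"
    using l by (simp add: deg_exp_compose[symmetric] deg_exp_lam algebra_simps
        flip: fps_const_mult)
  finally have eq: "EE lam * (CC lam oo EE lam) = fps_X" .
  have "EE lam \<noteq> 0"
  proof
    assume "EE lam = 0"
    then have "fps_nth (EE lam) 1 = 0" by simp
    then show False by (simp add: EE_def deg_exp_nth gen_ff_def)
  qed
  then show ?thesis using eq by (metis nonzero_mult_div_cancel_left)
qed

lemma main_part:
  fixes lam x :: real and n :: nat
  assumes l: "lam \<noteq> 0"
  shows "deg_bernoulli lam n x =
           (\<Sum>k=0..n. fact k * deg_stirling2 lam n k *
              (\<Sum>j=0..k. (x gchoose j) * lam ^ (k - j) / fact (k - j + 1)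
                            * gen_ff 1 (k - j + 1) (1 / lam)))"
proof -
  have E0: "fps_nth (EE lam) 0 = 0" by (rule EE_0)
  have "fps_X / (deg_exp lam 1 - 1) * deg_exp lam x = (CC lam oo EE lam) * (fps_binomial x oo EE lam)"
    using XE[OF l] by (simp add: EE_def[symmetric] deg_exp_compose[of lam x])
  also have "\<dots> = (fps_binomial x * CC lam) oo EE lam"
    using E0 by (simp add: fps_compose_mult_distrib mult.commute)
  finally have "deg_bernoulli lam n x = fact n * (\<Sum>k=0..n. fps_nth (fps_binomial x * CC lam) k * fps_nth (EE lam ^ k) n)"
    by (simp add: deg_bernoulli_def fps_compose_nth)
  also have "\<dots> = (\<Sum>k=0..n. fact k * deg_stirling2 lam n k * fps_nth (fps_binomial x * CC lam) k)"
    by (simp add: sum_distrib_left stirling_eq mult_ac)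
  also have "\<dots> = (\<Sum>k=0..n. fact k * deg_stirling2 lam n k *
              (\<Sum>j=0..k. (x gchoose j) * lam ^ (k - j) / fact (k - j + 1)
                            * gen_ff 1 (k - j + 1) (1 / lam)))"
    by (simp add: fps_mult_nth CC_def mult.assoc)
  finally show ?thesis .
qed

theorem theorem7:
  fixes lam x :: real and n :: nat
  assumes "lam \<noteq> 0"
  shows "deg_bernoulli lam n x =
           (\<Sum>k=0..n. fact k * deg_stirling2 lam n k *
              (\<Sum>j=0..k. (x gchoose j) * lam ^ (k - j) / fact (k - j + 1)
                            * gen_ff 1 (k - j + 1) (1 / lam))) \<and>
         deg_bernoulli lam n 0 =
           (\<Sum>k=0..n. fact k * deg_stirling2 lam n k *
              lam ^ k / fact (k + 1) * gen_ff 1 (k + 1) (1 / lam))"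
proof
  show "deg_bernoulli lam n x =
           (\<Sum>k=0..n. fact k * deg_stirling2 lam n k *
              (\<Sum>j=0..k. (x gchoose j) * lam ^ (k - j) / fact (k - j + 1)
                            * gen_ff 1 (k - j + 1) (1 / lam)))"
    by (rule main_part[OF assms])
  have g0: "j \<noteq> 0 \<Longrightarrow> ((0::real) gchoose j) = 0" for j by (cases j) simp_all
  have s: "(\<Sum>j=0..k. ((0::real) gchoose j) * lam ^ (k - j) / fact (k - j + 1)
                            * gen_ff 1 (k - j + 1) (1 / lam)) = lam ^ k / fact (k + 1) * gen_ff 1 (k + 1) (1 / lam)" for k
    by (subst sum.remove[of _ 0]) (auto simp: g0 intro!: sum.neutral)
  show "deg_bernoulli lam n 0 =
           (\<Sum>k=0..n. fact k * deg_stirling2 lam n k *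
              lam ^ k / fact (k + 1) * gen_ff 1 (k + 1) (1 / lam))"
    unfolding main_part[OF assms, where x=0] s by (intro sum.cong) auto
qed

end
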